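(* There is a universal constant $c>0$ such that for all sufficiently large $T$ and every (possibly randomized) forecasting algorithm $\mathcal{A}$ the following holds. Run $\mathcal{A}$ for $T$ steps on outcomes $x_1,\ldots,x_T$ that are independent $\mathrm{Bernoulli}(1/2)$ bits, and let $S_t = \sum_{t'=1}^t (x_{t'} - p_{t'})$ for $t \in [T]$. Then at least one of the following holds: $\Pr[\max_{t \in [T]} |S_t| \ge c\,T^{1/3}] \ge c$, or $\mathbb{E}[\mathsf{smCE}(x,p)] \ge c\,T^{1/3}$, where probability and expectation are over the random bits and the randomness of $\mathcal{A}$.
   Context: A forecasting algorithm chooses each prediction $p_t \in [0,1]$ as a (possibly randomized) function of $x_1,\ldots,x_{t-1}, p_1,\ldots,p_{t-1}$, before $x_t$ is revealed. $\mathsf{smCE}(x,p) = \sup_{f \in \mathcal{F}} \sum_{t=1}^T f(p_t)(x_t - p_t)$, where $\mathcal{F}$ is the family of $1$-Lipschitz functions from $[0,1]$ to $[-1,1]$. *)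

theory Defs
  imports "HOL-Probability.Probability"
begin

text \<open>Outcome sequences of length T are bit lists bs (bs ! (t-1) is x_t, t = 1..T).
  A randomized forecasting algorithm is a function A of a random seed w (drawn from a
  probability measure M on a standard space, here the reals) and the list of past
  outcomes [x_1,...,x_(t-1)]; its prediction is p_t = A w [x_1,...,x_(t-1)].\<close>

definition outcome :: "bool list \<Rightarrow> nat \<Rightarrow> real" where
  "outcome bs t = (if bs ! (t - 1) then 1 else 0)"

definition forecast :: "(real \<Rightarrow> bool list \<Rightarrow> real) \<Rightarrow> real \<Rightarrow> bool list \<Rightarrow> nat \<Rightarrow> real" where
  "forecast A w bs t = A w (take (t - 1) bs)"

definition partial_bias ::
  "(real \<Rightarrow> bool list \<Rightarrow> real) \<Rightarrow> real \<Rightarrow> bool list \<Rightarrow> nat \<Rightarrow> real" where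
  "partial_bias A w bs t = (\<Sum>s=1..t. outcome bs s - forecast A w bs s)"

definition Lip1 :: "(real \<Rightarrow> real) set" where
  "Lip1 = {f. (\<forall>u\<in>{0..1}. \<forall>v\<in>{0..1}. \<bar>f u - f v\<bar> \<le> \<bar>u - v\<bar>) \<and>
             (\<forall>u\<in>{0..1}. \<bar>f u\<bar> \<le> 1)}"

definition smCE :: "nat \<Rightarrow> (nat \<Rightarrow> real) \<Rightarrow> (nat \<Rightarrow> real) \<Rightarrow> real" where
  "smCE T x p = (SUP f\<in>Lip1. \<Sum>t=1..T. f (p t) * (x t - p t))"

end

theory Submission
  imports Defs
begin

lemma outcome_take: "1 \<le> s \<Longrightarrow> s \<le> k \<Longrightarrow> outcome (take k bs) s = outcome bs s"
  unfolding outcome_def by simp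

lemma forecast_take: "s \<le> Suc k \<Longrightarrow> forecast A w (take k bs) s = forecast A w bs s"
  proof -
  assume "s \<le> Suc k" then have "s - 1 \<le> k" by simp
  then show ?thesis unfolding forecast_def by (simp add: min_absorb1)
qed

lemma pb_take: "s \<le> k \<Longrightarrow> partial_bias A w (take k bs) s = partial_bias A w bs s"
  unfolding partial_bias_def
  by (intro sum.cong refl) (simp add: outcome_take forecast_take)

lemma pb_0: "partial_bias A w bs 0 = 0"
  unfolding partial_bias_def by simp

lemma pb_Suc: "partial_bias A w bs (Suc n) = partial_bias A w bs n + (outcome bs (Suc n) - forecast A w bs (Suc n))"
  unfolding partial_bias_def by simp

lemma outcome_01: "outcome bs t = 0 \<or> outcome bs t = 1"
  unfolding outcome_def by simp

lemma flip_sum: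
  fixes F :: "bool list \<Rightarrow> real"
  assumes t: "1 \<le> t" "t \<le> T" and inv: "\<And>bs. F (take (t-1) bs) = F bs"
  shows "(\<Sum>bs\<in>{bs. length bs = T}. F bs * (outcome bs t - 1/2)) = 0"
proof -
  define \<sigma> where "\<sigma> bs = bs[t-1 := \<not> bs!(t-1)]" for bs :: "bool list"
  let ?S = "{bs::bool list. length bs = T}"
  let ?h = "\<lambda>bs. F bs * (outcome bs t - 1/2)"
  have ss: "\<sigma> (\<sigma> bs) = bs" if "bs \<in> ?S" for bs
    using that t unfolding \<sigma>_def by (simp add: list_update_overwrite)
  have sS: "\<sigma> bs \<in> ?S" if "bs \<in> ?S" for bs
    using that unfolding \<sigma>_def by simp
  have hs: "?h (\<sigma> bs) = - ?h bs" if "bs \<in> ?S" for bs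
  proof -
    have "F (\<sigma> bs) = F bs"
      by (metis inv \<sigma>_def order_refl take_update_cancel)
    moreover have "outcome (\<sigma> bs) t = 1 - outcome bs t"
      using that t unfolding \<sigma>_def outcome_def by simp
    ultimately have "?h (\<sigma> bs) = F bs * ((1 - outcome bs t) - 1/2)" by simp
    then show ?thesis by (simp add: algebra_simps)
  qed
  have "sum (\<lambda>bs. - ?h bs) ?S = sum ?h ?S"
    by (rule sum.reindex_bij_witness[of _ \<sigma> \<sigma>]) (use ss sS hs in auto)
  then show ?thesis by (simp add: sum_negf)
qed

definition gind :: "real \<Rightarrow> (real \<Rightarrow> bool list \<Rightarrow> real) \<Rightarrow> real \<Rightarrow> bool list \<Rightarrow> nat \<Rightarrow> real" where
  "gind B A w bs t = (if \<forall>s<t. \<bar>partial_bias A w bs s\<bar> < B then 1 else 0)"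

lemma pb_step_bound:
  assumes "\<forall>h. 0 \<le> A w h \<and> A w h \<le> 1"
  shows "\<bar>partial_bias A w bs (Suc n)\<bar> \<le> \<bar>partial_bias A w bs n\<bar> + 1"
proof -
  have "0 \<le> forecast A w bs (Suc n)" "forecast A w bs (Suc n) \<le> 1"
    using assms unfolding forecast_def by auto
  then show ?thesis using outcome_01[of bs "Suc n"] unfolding pb_Suc by auto
qed

lemma stop_bound:
  assumes A01: "\<forall>h. 0 \<le> A w h \<and> A w h \<le> 1"
  shows "(\<Sum>t=1..n. gind B A w bs t * ((partial_bias A w bs t)^2 - (partial_bias A w bs (t-1))^2)) \<le> (B+1)^2
     \<and> ((\<forall>s<Suc n. \<bar>partial_bias A w bs s\<bar> < B) \<longrightarrow>
         (\<Sum>t=1..n. gind B A w bs t * ((partial_bias A w bs t)^2 - (partial_bias A w bs (t-1))^2)) = (partial_bias A w bs n)^2)"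
proof (induction n)
  case 0
  then show ?case by (simp add: pb_0)
next
  case (Suc n)
  let ?G = "\<lambda>n. (\<Sum>t=1..n. gind B A w bs t * ((partial_bias A w bs t)^2 - (partial_bias A w bs (t-1))^2))"
  have G: "?G (Suc n) = ?G n + gind B A w bs (Suc n) * ((partial_bias A w bs (Suc n))^2 - (partial_bias A w bs n)^2)"
    by simp
  show ?case
  proof (cases "\<forall>s<Suc n. \<bar>partial_bias A w bs s\<bar> < B")
    case True
    then have g1: "gind B A w bs (Suc n) = 1" unfolding gind_def by simp
    have Gn: "?G n = (partial_bias A w bs n)^2" using Suc.IH True by blast
    have "\<bar>partial_bias A w bs n\<bar> < B" using True by simp
    then have "\<bar>partial_bias A w bs (Suc n)\<bar> \<le> \<bar>B+1\<bar>" using pb_step_bound[of A w bs n, OF A01] by simp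
    then have "(partial_bias A w bs (Suc n))^2 \<le> (B+1)^2" by (simp add: abs_le_square_iff)
    then show ?thesis unfolding G g1 Gn by simp
  next
    case False
    then have g0: "gind B A w bs (Suc n) = 0" unfolding gind_def by simp
    show ?thesis unfolding G g0 using Suc.IH False by auto
  qed
qed

lemma finite_L: "finite {bs::bool list. length bs = T}"
  using finite_lists_length_eq[of "UNIV::bool set" T] by simp

lemma card_L: "card {bs::bool list. length bs = T} = 2 ^ T"
  using card_lists_length_eq[of "UNIV::bool set" T] by simp

lemma gind_take: "t - 1 \<le> k \<Longrightarrow> gind B A w (take k bs) t = gind B A w bs t"
  unfolding gind_def by (simp add: pb_take)

lemma alg:
  fixes g s x q :: real
  assumes "(x - 1/2)^2 = 1/4"
  shows "g * ((s + (x - 1/2) - q)^2 - s^2) = g/4 + g * q^2 - 2 * g * s * q + (g * (2 * s - 2 * q)) * (x - 1/2)"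
proof -
  have "g * ((s + (x - 1/2) - q)^2 - s^2) = g * (x - 1/2)^2 + g * q^2 - 2 * g * s * q + (g * (2 * s - 2 * q)) * (x - 1/2)"
    by (simp add: power2_eq_square algebra_simps)
  then show ?thesis using assms by simp
qed

lemma decomp:
  assumes "1 \<le> t"
  shows "gind B A w bs t * ((partial_bias A w bs t)^2 - (partial_bias A w bs (t-1))^2)
    = gind B A w bs t / 4 + gind B A w bs t * (forecast A w bs t - 1/2)^2
      - 2 * gind B A w bs t * partial_bias A w bs (t-1) * (forecast A w bs t - 1/2)
      + (gind B A w bs t * (2 * partial_bias A w bs (t-1) - 2 * (forecast A w bs t - 1/2))) * (outcome bs t - 1/2)"
proof -
  obtain m where m: "t = Suc m" using assms by (cases t) auto
  have S: "partial_bias A w bs t = partial_bias A w bs (t-1) + (outcome bs t - 1/2) - (forecast A w bs t - 1/2)"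
    unfolding m pb_Suc by simp
  have x: "(outcome bs t - 1/2)^2 = 1/4" using outcome_01[of bs t] by (auto simp: power2_eq_square)
  show ?thesis unfolding S by (rule alg[OF x])
qed

lemma perw:
  assumes A01: "\<forall>h. 0 \<le> A w h \<and> A w h \<le> 1" and B: "B > 0"
  shows "real T / 4 * (\<Sum>bs\<in>{bs. length bs = T}. (if \<forall>t\<in>{1..T}. \<bar>partial_bias A w bs t\<bar> < B then 1 else 0))
     \<le> 2^T * ((B+1)^2 + real T/16) + 16*B^2 * (\<Sum>bs\<in>{bs. length bs = T}. \<Sum>t=1..T. (forecast A w bs t - 1/2)^2)"
proof -
  let ?L = "{bs::bool list. length bs = T}"
  let ?g = "gind B A w"
  let ?S = "partial_bias A w"
  let ?q = "\<lambda>bs t. forecast A w bs t - 1/2"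
  let ?good = "\<lambda>bs. (if \<forall>t\<in>{1..T}. \<bar>?S bs t\<bar> < B then 1 else 0::real)"
  define F where "F t bs = ?g bs t * (2 * ?S bs (t-1) - 2 * ?q bs t)" for t bs
  define P where "P bs t = ?g bs t / 4 + ?g bs t * (?q bs t)^2 - 2 * ?g bs t * ?S bs (t-1) * ?q bs t" for bs t
  have zero: "(\<Sum>bs\<in>?L. F t bs * (outcome bs t - 1/2)) = 0" if "t \<in> {1..T}" for t
  proof (rule flip_sum)
    show "1 \<le> t" "t \<le> T" using that by auto
    show "F t (take (t - 1) bs) = F t bs" for bs
      unfolding F_def by (simp add: gind_take pb_take forecast_take)
  qed
  have "(\<Sum>bs\<in>?L. \<Sum>t=1..T. ?g bs t * ((?S bs t)^2 - (?S bs (t-1))^2))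
      = (\<Sum>bs\<in>?L. \<Sum>t=1..T. P bs t + F t bs * (outcome bs t - 1/2))"
  proof (intro sum.cong refl)
    fix bs t assume "t \<in> {1..T}"
    then show "?g bs t * ((?S bs t)^2 - (?S bs (t-1))^2) = P bs t + F t bs * (outcome bs t - 1/2)"
      unfolding P_def F_def by (intro decomp) simp
  qed
  also have "\<dots> = (\<Sum>bs\<in>?L. \<Sum>t=1..T. P bs t) + (\<Sum>bs\<in>?L. \<Sum>t=1..T. F t bs * (outcome bs t - 1/2))"
    by (simp add: sum.distrib)
  also have "(\<Sum>bs\<in>?L. \<Sum>t=1..T. F t bs * (outcome bs t - 1/2)) = (\<Sum>t=1..T. \<Sum>bs\<in>?L. F t bs * (outcome bs t - 1/2))"
    by (rule sum.swap)
  finally have eq: "(\<Sum>bs\<in>?L. \<Sum>t=1..T. ?g bs t * ((?S bs t)^2 - (?S bs (t-1))^2))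
      = (\<Sum>bs\<in>?L. \<Sum>t=1..T. P bs t) + (\<Sum>t=1..T. \<Sum>bs\<in>?L. F t bs * (outcome bs t - 1/2))" .
  have "(\<Sum>bs\<in>?L. \<Sum>t=1..T. P bs t) + (\<Sum>t=1..T. \<Sum>bs\<in>?L. F t bs * (outcome bs t - 1/2))
      = (\<Sum>bs\<in>?L. \<Sum>t=1..T. ?g bs t * ((?S bs t)^2 - (?S bs (t-1))^2))"
    using eq by simp
  also have "\<dots> \<le> (\<Sum>bs\<in>?L. (B+1)^2)"
    by (intro sum_mono) (use stop_bound[of A w, OF A01] in blast)
  also have "\<dots> = 2^T * (B+1)^2" by (simp add: card_L)
  finally have up: "(\<Sum>bs\<in>?L. \<Sum>t=1..T. P bs t) \<le> 2^T * (B+1)^2"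
    using zero by simp
  have low: "?good bs / 4 - 1/16 - 16 * B^2 * (?q bs t)^2 \<le> P bs t" if "t \<in> {1..T}" for bs t
  proof (cases "\<forall>s<t. \<bar>?S bs s\<bar> < B")
    case True
    then have g: "?g bs t = 1" unfolding gind_def by simp
    have Sb: "\<bar>?S bs (t-1)\<bar> < B" using True that by auto
    have m1: "?S bs (t-1) * ?q bs t \<le> \<bar>?S bs (t-1)\<bar> * \<bar>?q bs t\<bar>"
      by (metis abs_ge_self abs_mult)
    have m2: "\<bar>?S bs (t-1)\<bar> * \<bar>?q bs t\<bar> \<le> B * \<bar>?q bs t\<bar>"
      by (rule mult_right_mono) (use Sb in auto)
    have m3: "2 * (B * \<bar>?q bs t\<bar>) \<le> 1/16 + 16 * (B^2 * (?q bs t)^2)"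
    proof -
      have "0 \<le> (4 * (B * \<bar>?q bs t\<bar>) - 1/4)^2" by simp
      also have "(4 * (B * \<bar>?q bs t\<bar>) - 1/4)^2 = 16 * (B^2 * (?q bs t)^2) - 2 * (B * \<bar>?q bs t\<bar>) + 1/16"
        by (simp add: power2_eq_square algebra_simps)
      finally show ?thesis by linarith
    qed
    have gd: "?good bs \<le> 1" by simp
    have Pe: "P bs t = 1/4 + (?q bs t)^2 - 2 * (?S bs (t-1) * ?q bs t)"
      unfolding P_def g by simp
    have q0: "0 \<le> (?q bs t)^2" by simp
    have "16 * B^2 * (?q bs t)^2 = 16 * (B^2 * (?q bs t)^2)" by simp
    then show ?thesis unfolding Pe using m1 m2 m3 gd q0 by linarith
  next
    case False
    then have g: "?g bs t = 0" unfolding gind_def by simp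
    obtain s where s: "s < t" "\<not> \<bar>?S bs s\<bar> < B" using False by auto
    have "s \<noteq> 0"
    proof
      assume "s = 0"
      then show False using s(2) B by (simp add: pb_0)
    qed
    then have "s \<in> {1..T}" using s that by auto
    then have "?good bs = 0" using s by auto
    moreover have "0 \<le> 16 * B^2 * (?q bs t)^2" by simp
    moreover have "P bs t = 0" unfolding P_def g by simp
    ultimately show ?thesis by linarith
  qed
  have lo: "(\<Sum>bs\<in>?L. \<Sum>t=1..T. ?good bs / 4 - 1/16 - 16 * B^2 * (?q bs t)^2) \<le> (\<Sum>bs\<in>?L. \<Sum>t=1..T. P bs t)"
    by (intro sum_mono low) simp
  have i1: "(\<Sum>t=1..T. ?good bs / 4 - 1/16 - 16 * B^2 * (?q bs t)^2)
      = real T * (?good bs / 4) - real T / 16 - 16 * B^2 * (\<Sum>t=1..T. (?q bs t)^2)" for bs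
    by (simp add: sum_subtractf sum_distrib_left)
  have i2: "(\<Sum>bs\<in>?L. \<Sum>t=1..T. ?good bs / 4 - 1/16 - 16 * B^2 * (?q bs t)^2)
     = (\<Sum>bs\<in>?L. real T * (?good bs / 4)) - (\<Sum>bs\<in>?L. real T / 16) - (\<Sum>bs\<in>?L. 16 * B^2 * (\<Sum>t=1..T. (?q bs t)^2))"
    unfolding i1 by (simp only: sum_subtractf)
  have i3: "(\<Sum>bs\<in>?L. real T * (?good bs / 4)) = real T / 4 * (\<Sum>bs\<in>?L. ?good bs)"
    by (simp add: sum_distrib_left sum_divide_distrib)
  have i4: "(\<Sum>bs\<in>?L. real T / 16) = 2^T * (real T/16)" by (simp add: card_L)
  have i5: "(\<Sum>bs\<in>?L. 16 * B^2 * (\<Sum>t=1..T. (?q bs t)^2)) = 16*B^2 * (\<Sum>bs\<in>?L. \<Sum>t=1..T. (?q bs t)^2)"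
    by (simp add: sum_distrib_left)
  have fin: "real T / 4 * (\<Sum>bs\<in>?L. ?good bs) - 2^T * (real T/16) - 16*B^2 * (\<Sum>bs\<in>?L. \<Sum>t=1..T. (?q bs t)^2)
      \<le> 2^T * (B+1)^2"
    using lo up unfolding i2 i3 i4 i5 by linarith
  have "2^T * ((B+1)^2 + real T/16) = 2^T * (B+1)^2 + 2^T * (real T/16)" by (simp add: distrib_left)
  then show ?thesis using fin by linarith
qed

lemma zero_Lip1: "(\<lambda>_. 0) \<in> Lip1"
  unfolding Lip1_def by auto

lemma half_Lip1: "(\<lambda>u. 1/2 - u) \<in> Lip1"
  unfolding Lip1_def by auto

lemma term_bound:
  assumes "f \<in> Lip1" "0 \<le> p" "p \<le> 1" "0 \<le> x" "x \<le> 1"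
  shows "\<bar>f p * (x - p)\<bar> \<le> 1"
proof -
  have "\<bar>f p\<bar> \<le> 1" using assms unfolding Lip1_def by auto
  moreover have "\<bar>x - p\<bar> \<le> 1" using assms by auto
  ultimately show ?thesis by (simp add: abs_mult mult_le_one)
qed

lemma val_bound:
  fixes T :: nat and p x :: "nat \<Rightarrow> real"
  assumes "f \<in> Lip1" "\<forall>t\<in>{1..T}. 0 \<le> p t \<and> p t \<le> 1 \<and> 0 \<le> x t \<and> x t \<le> 1"
  shows "(\<Sum>t=1..T. f (p t) * (x t - p t)) \<le> real T"
proof -
  have "(\<Sum>t=1..T. f (p t) * (x t - p t)) \<le> (\<Sum>t=1..T. 1)"
    by (intro sum_mono) (use term_bound[OF assms(1)] assms(2) in fastforce)
  then show ?thesis by simp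
qed

lemma bdd_val:
  fixes T :: nat and p x :: "nat \<Rightarrow> real"
  assumes "\<forall>t\<in>{1..T}. 0 \<le> p t \<and> p t \<le> 1 \<and> 0 \<le> x t \<and> x t \<le> 1"
  shows "bdd_above ((\<lambda>f. \<Sum>t=1..T. f (p t) * (x t - p t)) ` Lip1)"
  using val_bound[where x=x, OF _ assms] by (intro bdd_aboveI2) auto

lemma smCE_ge:
  assumes "f \<in> Lip1" "\<forall>t\<in>{1..T}. 0 \<le> p t \<and> p t \<le> 1 \<and> 0 \<le> x t \<and> x t \<le> 1"
  shows "(\<Sum>t=1..T. f (p t) * (x t - p t)) \<le> smCE T x p"
  unfolding smCE_def by (rule cSUP_upper[OF assms(1) bdd_val[OF assms(2)]])

lemma smCE_le:
  assumes "\<forall>t\<in>{1..T}. 0 \<le> p t \<and> p t \<le> 1 \<and> 0 \<le> x t \<and> x t \<le> 1"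
  shows "smCE T x p \<le> real T"
  unfolding smCE_def
  by (rule cSUP_least) (use zero_Lip1 val_bound[where x=x, OF _ assms] in auto)

lemma smCE_nonneg:
  assumes "\<forall>t\<in>{1..T}. 0 \<le> p t \<and> p t \<le> 1 \<and> 0 \<le> x t \<and> x t \<le> 1"
  shows "0 \<le> smCE T x p"
  using smCE_ge[OF zero_Lip1 assms] by simp

lemma smCE_lip:
  assumes u: "\<forall>t\<in>{1..T}. 0 \<le> u t \<and> u t \<le> 1 \<and> 0 \<le> x t \<and> x t \<le> 1"
    and v: "\<forall>t\<in>{1..T}. 0 \<le> v t \<and> v t \<le> 1 \<and> 0 \<le> x t \<and> x t \<le> 1"
  shows "smCE T x u \<le> smCE T x v + 2 * (\<Sum>t=1..T. \<bar>u t - v t\<bar>)"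
  unfolding smCE_def[of T x u]
proof (rule cSUP_least)
  show "Lip1 \<noteq> {}" using zero_Lip1 by auto
  fix f assume f: "f \<in> Lip1"
  have tb: "f (u t) * (x t - u t) \<le> f (v t) * (x t - v t) + 2 * \<bar>u t - v t\<bar>" if t: "t \<in> {1..T}" for t
  proof -
    have "f (u t) * (x t - u t) - f (v t) * (x t - v t) = (f (u t) - f (v t)) * (x t - u t) + f (v t) * (v t - u t)"
      by (simp add: algebra_simps)
    also have "\<dots> \<le> \<bar>u t - v t\<bar> * 1 + 1 * \<bar>u t - v t\<bar>"
    proof -
      have l: "\<bar>f (u t) - f (v t)\<bar> \<le> \<bar>u t - v t\<bar>" "\<bar>f (v t)\<bar> \<le> 1"
        using f u v t unfolding Lip1_def by auto
      have "0 \<le> u t" "u t \<le> 1" "0 \<le> x t" "x t \<le> 1" using u t by auto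
      then have "\<bar>x t - u t\<bar> \<le> 1" by linarith
      have a1: "(f (u t) - f (v t)) * (x t - u t) \<le> \<bar>f (u t) - f (v t)\<bar> * \<bar>x t - u t\<bar>"
        by (metis abs_ge_self abs_mult)
      have a2: "\<bar>f (u t) - f (v t)\<bar> * \<bar>x t - u t\<bar> \<le> \<bar>u t - v t\<bar> * 1"
        by (rule mult_mono) (use l \<open>\<bar>x t - u t\<bar> \<le> 1\<close> in auto)
      have b1: "f (v t) * (v t - u t) \<le> \<bar>f (v t)\<bar> * \<bar>v t - u t\<bar>"
        by (metis abs_ge_self abs_mult)
      have b2: "\<bar>f (v t)\<bar> * \<bar>v t - u t\<bar> \<le> 1 * \<bar>u t - v t\<bar>"
        by (rule mult_mono) (use l in auto)
      have "(f (u t) - f (v t)) * (x t - u t) \<le> \<bar>u t - v t\<bar> * 1" using a1 a2 by linarith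
      moreover have "f (v t) * (v t - u t) \<le> 1 * \<bar>u t - v t\<bar>" using b1 b2 by linarith
      ultimately show ?thesis by linarith
    qed
    finally show ?thesis by simp
  qed
  have "(\<Sum>t=1..T. f (u t) * (x t - u t)) \<le> (\<Sum>t=1..T. f (v t) * (x t - v t) + 2 * \<bar>u t - v t\<bar>)"
    by (intro sum_mono tb) auto
  also have "\<dots> = (\<Sum>t=1..T. f (v t) * (x t - v t)) + 2 * (\<Sum>t=1..T. \<bar>u t - v t\<bar>)"
    by (simp add: sum.distrib sum_distrib_left)
  also have "\<dots> \<le> smCE T x v + 2 * (\<Sum>t=1..T. \<bar>u t - v t\<bar>)"
    using smCE_ge[OF f v] by simp
  finally show "(\<Sum>t=1..T. f (u t) * (x t - u t)) \<le> smCE T x v + 2 * (\<Sum>t=1..T. \<bar>u t - v t\<bar>)" .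
qed

lemma range_ok:
  assumes "\<forall>h. 0 \<le> A w h \<and> A w h \<le> 1"
  shows "\<forall>t\<in>{1..T}. 0 \<le> forecast A w bs t \<and> forecast A w bs t \<le> 1 \<and> 0 \<le> outcome bs t \<and> outcome bs t \<le> 1"
  using assms unfolding forecast_def outcome_def by auto

lemma smCE_sum_ge:
  assumes A01: "\<forall>h. 0 \<le> A w h \<and> A w h \<le> 1"
  shows "(\<Sum>bs\<in>{bs. length bs = T}. \<Sum>t=1..T. (forecast A w bs t - 1/2)^2)
     \<le> (\<Sum>bs\<in>{bs. length bs = T}. smCE T (outcome bs) (forecast A w bs))"
proof -
  let ?L = "{bs::bool list. length bs = T}"
  let ?q = "\<lambda>bs t. forecast A w bs t - 1/2"
  have z: "(\<Sum>bs\<in>?L. ?q bs t * (outcome bs t - 1/2)) = 0" if "t \<in> {1..T}" for t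
    by (rule flip_sum) (use that in \<open>auto simp: forecast_take\<close>)
  have "(\<Sum>bs\<in>?L. \<Sum>t=1..T. (?q bs t)^2)
      = (\<Sum>bs\<in>?L. \<Sum>t=1..T. (1/2 - forecast A w bs t) * (outcome bs t - forecast A w bs t))
        + (\<Sum>t=1..T. \<Sum>bs\<in>?L. ?q bs t * (outcome bs t - 1/2))"
  proof -
    have "(\<Sum>t=1..T. \<Sum>bs\<in>?L. ?q bs t * (outcome bs t - 1/2)) = (\<Sum>bs\<in>?L. \<Sum>t=1..T. ?q bs t * (outcome bs t - 1/2))"
      by (rule sum.swap)
    moreover have "(\<Sum>bs\<in>?L. \<Sum>t=1..T. (?q bs t)^2) = (\<Sum>bs\<in>?L. \<Sum>t=1..T. (1/2 - forecast A w bs t) * (outcome bs t - forecast A w bs t)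
        + ?q bs t * (outcome bs t - 1/2))"
      by (intro sum.cong refl) (simp add: power2_eq_square algebra_simps)
    ultimately show ?thesis by (simp add: sum.distrib)
  qed
  also have "(\<Sum>t=1..T. \<Sum>bs\<in>?L. ?q bs t * (outcome bs t - 1/2)) = 0"
    using z by simp
  also have "(\<Sum>bs\<in>?L. \<Sum>t=1..T. (1/2 - forecast A w bs t) * (outcome bs t - forecast A w bs t))
      \<le> (\<Sum>bs\<in>?L. smCE T (outcome bs) (forecast A w bs))"
    by (intro sum_mono smCE_ge[OF half_Lip1] range_ok[of A w, OF A01])
  finally show ?thesis by simp
qed

definition clamp01 :: "real \<Rightarrow> real" where "clamp01 y = max 0 (min 1 y)"

lemma clamp01_lip: "\<bar>clamp01 a - clamp01 b\<bar> \<le> \<bar>a - b\<bar>"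
  unfolding clamp01_def by auto

lemma clamp01_id: "0 \<le> y \<Longrightarrow> y \<le> 1 \<Longrightarrow> clamp01 y = y"
  unfolding clamp01_def by auto

lemma Phi_cont:
  fixes x :: "nat \<Rightarrow> real"
  assumes x: "\<forall>t. 0 \<le> x t \<and> x t \<le> 1"
  shows "continuous_on UNIV (\<lambda>p::nat\<Rightarrow>real. smCE T x (\<lambda>t. clamp01 (p t)))"
  unfolding continuous_on_def
proof (intro ballI)
  fix p :: "nat \<Rightarrow> real"
  let ?\<Phi> = "\<lambda>p::nat\<Rightarrow>real. smCE T x (\<lambda>t. clamp01 (p t))"
  let ?Lf = "\<lambda>q::nat\<Rightarrow>real. 2 * (\<Sum>t=1..T. \<bar>q t - p t\<bar>)"
  have ok: "\<forall>t\<in>{1..T}. 0 \<le> clamp01 (q t) \<and> clamp01 (q t) \<le> 1 \<and> 0 \<le> x t \<and> x t \<le> 1" for q :: "nat \<Rightarrow> real"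
    using x unfolding clamp01_def by auto
  have bnd: "norm (?\<Phi> q - ?\<Phi> p) \<le> ?Lf q" for q
  proof -
    have s1: "(\<Sum>t=1..T. \<bar>clamp01 (q t) - clamp01 (p t)\<bar>) \<le> (\<Sum>t=1..T. \<bar>q t - p t\<bar>)"
      by (intro sum_mono clamp01_lip)
    have s2: "(\<Sum>t=1..T. \<bar>clamp01 (p t) - clamp01 (q t)\<bar>) \<le> (\<Sum>t=1..T. \<bar>q t - p t\<bar>)"
      by (intro sum_mono) (metis abs_minus_commute clamp01_lip)
    show ?thesis using smCE_lip[OF ok[of q] ok[of p]] smCE_lip[OF ok[of p] ok[of q]] s1 s2
      by (simp add: abs_le_iff)
  qed
  have "continuous_on UNIV ?Lf"
    by (intro continuous_intros continuous_on_product_coordinates)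
  then have "(?Lf \<longlongrightarrow> ?Lf p) (at p within UNIV)"
    unfolding continuous_on_def by blast
  then have L0: "(?Lf \<longlongrightarrow> 0) (at p within UNIV)" by simp
  have "((\<lambda>q. ?\<Phi> q - ?\<Phi> p) \<longlongrightarrow> 0) (at p within UNIV)"
    by (rule Lim_null_comparison[OF _ L0]) (use bnd in auto)
  then show "(?\<Phi> \<longlongrightarrow> ?\<Phi> p) (at p within UNIV)"
    by (simp add: LIM_zero_iff)
qed

lemma meas_forecast:
  assumes "\<forall>h. (\<lambda>w. A w h) \<in> borel_measurable M"
  shows "(\<lambda>w. forecast A w bs t) \<in> borel_measurable M"
  using assms unfolding forecast_def by blast

lemma meas_pb:
  assumes "\<forall>h. (\<lambda>w. A w h) \<in> borel_measurable M"
  shows "(\<lambda>w. partial_bias A w bs t) \<in> borel_measurable M"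
  unfolding partial_bias_def
  by (intro borel_measurable_sum borel_measurable_diff borel_measurable_const meas_forecast[OF assms])

lemma meas_smCE:
  assumes meas: "\<forall>h. (\<lambda>w. A w h) \<in> borel_measurable M"
    and A01: "\<forall>w h. 0 \<le> A w h \<and> A w h \<le> 1"
  shows "(\<lambda>w. smCE T (outcome bs) (forecast A w bs)) \<in> borel_measurable M"
proof -
  let ?\<Phi> = "\<lambda>p::nat\<Rightarrow>real. smCE T (outcome bs) (\<lambda>t. clamp01 (p t))"
  have eq: "smCE T (outcome bs) (forecast A w bs) = ?\<Phi> (\<lambda>t. forecast A w bs t)" for w
  proof -
    have "(\<lambda>t. clamp01 (forecast A w bs t)) = forecast A w bs"
      by (rule ext, rule clamp01_id) (use A01 in \<open>auto simp: forecast_def\<close>)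
    then show ?thesis by simp
  qed
  have g: "(\<lambda>w. \<lambda>t. forecast A w bs t) \<in> borel_measurable M"
    by (rule measurable_coordinatewise_then_product) (rule meas_forecast[OF meas])
  have x: "\<forall>t. 0 \<le> outcome bs t \<and> outcome bs t \<le> 1" unfolding outcome_def by auto
  have P: "?\<Phi> \<in> borel_measurable borel"
    by (rule borel_measurable_continuous_onI[OF Phi_cont[OF x]])
  show ?thesis unfolding eq using measurable_compose[OF g P] .
qed

lemma arith_div:
  fixes Z a X K b Y :: real
  assumes "Z > 0" "a * (Z - X) \<le> Z * K + b * Y"
  shows "a * (1 - X / Z) \<le> K + b * (Y / Z)"
proof -
  have e1: "Z * (a * (1 - X / Z)) = a * (Z - X)" using assms(1) by (simp add: field_simps)
  have e2: "Z * (K + b * (Y / Z)) = Z * K + b * Y" using assms(1) by (simp add: field_simps)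
  have "Z * (a * (1 - X / Z)) \<le> Z * (K + b * (Y / Z))" using e1 e2 assms(2) by linarith
  then show ?thesis using assms(1) by (simp add: mult_le_cancel_left_pos)
qed

theorem lemma12:
  shows "\<exists>c>0. \<exists>T0::nat. \<forall>T\<ge>T0. \<forall>(M::real measure) (A::real \<Rightarrow> bool list \<Rightarrow> real).
    prob_space M \<longrightarrow>
    (\<forall>h. (\<lambda>w. A w h) \<in> borel_measurable M) \<longrightarrow>
    (\<forall>w h. 0 \<le> A w h \<and> A w h \<le> 1) \<longrightarrow>
    ((\<Sum>bs\<in>{bs. length bs = T}.
        measure M {w\<in>space M. \<exists>t\<in>{1..T}. \<bar>partial_bias A w bs t\<bar> \<ge> c * real T powr (1/3)})
        / 2 ^ T \<ge> c
     \<or>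
     (\<Sum>bs\<in>{bs. length bs = T}.
        (\<integral>w. smCE T (outcome bs) (forecast A w bs) \<partial>M)) / 2 ^ T
        \<ge> c * real T powr (1/3))"
proof (intro exI[of _ "1/8::real"] conjI exI[of _ "512::nat"] allI impI)
  show "(0::real) < 1/8" by simp
  fix T :: nat and M :: "real measure" and A :: "real \<Rightarrow> bool list \<Rightarrow> real"
  assume T: "512 \<le> T" and PS: "prob_space M" and meas: "\<forall>h. (\<lambda>w. A w h) \<in> borel_measurable M"
    and A01: "\<forall>w h. 0 \<le> A w h \<and> A w h \<le> 1"
  interpret prob_space M by (rule PS)
  define r where "r = real T powr (1/3)"
  define B where "B = 1/8 * real T powr (1/3)"
  let ?L = "{bs::bool list. length bs = T}"
  define bad where "bad bs = {w\<in>space M. \<exists>t\<in>{1..T}. \<bar>partial_bias A w bs t\<bar> \<ge> B}" for bs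
  have Tpos: "real T > 0" using T by simp
  have r3: "r ^ 3 = real T"
    unfolding r_def using Tpos by (simp add: powr_realpow[symmetric] powr_powr)
  have rpos: "r > 0" unfolding r_def using Tpos by simp
  have r8: "r \<ge> 8"
  proof (rule ccontr)
    assume "\<not> 8 \<le> r"
    then have "r ^ 3 < 8 ^ 3" using rpos by (intro power_strict_mono) auto
    then show False using r3 T by simp
  qed
  have Br: "B = r / 8" unfolding B_def r_def by simp
  have B1: "B \<ge> 1" using r8 Br by simp
  have r8B: "r = 8 * B" using Br by simp
  have B3: "B ^ 3 = real T / 512"
  proof -
    have "r ^ 3 = 512 * B ^ 3" unfolding r8B by (simp add: power_mult_distrib)
    then show ?thesis using r3 by simp
  qed
  have Bsq: "(B + 1)^2 \<le> real T / 16"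
  proof -
    have a: "(B + 1)^2 \<le> (2 * B)^2" by (rule power_mono) (use B1 in auto)
    have b: "(2 * B)^2 = 4 * B^2" by (simp add: power2_eq_square)
    have c: "B^2 \<le> B^3" by (rule power_increasing) (use B1 in auto)
    show ?thesis using a b c B3 by linarith
  qed
  have bad_sets: "bad bs \<in> sets M" for bs
  proof -
    have [measurable]: "(\<lambda>w. partial_bias A w bs t) \<in> borel_measurable M" for t
      by (rule meas_pb[OF meas])
    show ?thesis unfolding bad_def by measurable
  qed
  have smCE_int: "integrable M (\<lambda>w. smCE T (outcome bs) (forecast A w bs))" for bs
  proof (rule integrable_const_bound[where B="real T"])
    show "AE w in M. norm (smCE T (outcome bs) (forecast A w bs)) \<le> real T"
      using smCE_nonneg[OF range_ok] smCE_le[OF range_ok] A01 by (intro AE_I2) auto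
    show "(\<lambda>w. smCE T (outcome bs) (forecast A w bs)) \<in> borel_measurable M"
      by (rule meas_smCE[OF meas A01])
  qed
  define K where "K = (B+1)^2 + real T/16"
  have pw: "real T / 4 * (2^T - (\<Sum>bs\<in>?L. indicator (bad bs) w))
      \<le> 2^T * K + 16*B^2 * (\<Sum>bs\<in>?L. smCE T (outcome bs) (forecast A w bs))" if w: "w \<in> space M" for w
  proof -
    have A01w: "\<forall>h. 0 \<le> A w h \<and> A w h \<le> 1" using A01 by auto
    have "(\<Sum>bs\<in>?L. (if \<forall>t\<in>{1..T}. \<bar>partial_bias A w bs t\<bar> < B then 1 else 0))
        = (\<Sum>bs\<in>?L. 1 - indicator (bad bs) w :: real)"
      by (intro sum.cong refl) (auto simp: bad_def indicator_def w not_less)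
    also have "\<dots> = 2^T - (\<Sum>bs\<in>?L. indicator (bad bs) w :: real)"
      by (simp add: sum_subtractf card_L)
    finally have e: "(\<Sum>bs\<in>?L. (if \<forall>t\<in>{1..T}. \<bar>partial_bias A w bs t\<bar> < B then 1 else 0))
        = 2^T - (\<Sum>bs\<in>?L. indicator (bad bs) w :: real)" .
    have Qb: "16*B^2 * (\<Sum>bs\<in>?L. \<Sum>t=1..T. (forecast A w bs t - 1/2)^2)
        \<le> 16*B^2 * (\<Sum>bs\<in>?L. smCE T (outcome bs) (forecast A w bs))"
      by (intro mult_left_mono smCE_sum_ge[of A w, OF A01w]) auto
    have B0: "B > 0" using B1 by simp
    have p: "real T / 4 * (2^T - (\<Sum>bs\<in>?L. indicator (bad bs) w :: real))
      \<le> 2^T * K + 16*B^2 * (\<Sum>bs\<in>?L. \<Sum>t=1..T. (forecast A w bs t - 1/2)^2)"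
      using perw[of A w B T, OF A01w B0] unfolding e K_def by (simp add: algebra_simps)
    show ?thesis using p Qb by linarith
  qed
  have main: "real T / 4 * (2^T - (\<Sum>bs\<in>?L. measure M (bad bs)))
      \<le> 2^T * K + 16*B^2 * (\<Sum>bs\<in>?L. integral\<^sup>L M (\<lambda>w. smCE T (outcome bs) (forecast A w bs)))"
  proof -
    have fin: "finite ?L" by (rule finite_L)
    have ind_int: "integrable M (indicator (bad bs) :: real \<Rightarrow> real)" for bs
      by (rule integrable_real_indicator) (auto intro: bad_sets simp: emeasure_eq_measure)
    have ii: "integrable M (\<lambda>w. \<Sum>bs\<in>?L. indicator (bad bs) w :: real)"
      using ind_int by (intro Bochner_Integration.integrable_sum) auto
    have si: "integrable M (\<lambda>w. \<Sum>bs\<in>?L. smCE T (outcome bs) (forecast A w bs))"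
      by (rule Bochner_Integration.integrable_sum) (rule smCE_int)
    have intL: "integrable M (\<lambda>w. real T / 4 * (2^T - (\<Sum>bs\<in>?L. indicator (bad bs) w :: real)))"
      using ii by simp
    have intR: "integrable M (\<lambda>w. 2^T * K + 16*B^2 * (\<Sum>bs\<in>?L. smCE T (outcome bs) (forecast A w bs)))"
      using si by simp
    have I1: "integral\<^sup>L M (\<lambda>w. real T / 4 * (2^T - (\<Sum>bs\<in>?L. indicator (bad bs) w :: real)))
       \<le> integral\<^sup>L M (\<lambda>w. 2^T * K + 16*B^2 * (\<Sum>bs\<in>?L. smCE T (outcome bs) (forecast A w bs)))"
      by (rule integral_mono[OF intL intR pw])
    have E1: "integral\<^sup>L M (\<lambda>w. 2^T * K + 16*B^2 * (\<Sum>bs\<in>?L. smCE T (outcome bs) (forecast A w bs)))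
       = 2^T * K + 16*B^2 * (\<Sum>bs\<in>?L. integral\<^sup>L M (\<lambda>w. smCE T (outcome bs) (forecast A w bs)))"
    proof -
      have "integral\<^sup>L M (\<lambda>w. 2^T * K + 16*B^2 * (\<Sum>bs\<in>?L. smCE T (outcome bs) (forecast A w bs)))
         = integral\<^sup>L M (\<lambda>w. 2^T * K) + integral\<^sup>L M (\<lambda>w. 16*B^2 * (\<Sum>bs\<in>?L. smCE T (outcome bs) (forecast A w bs)))"
        by (rule Bochner_Integration.integral_add) (use si in auto)
      also have "integral\<^sup>L M (\<lambda>w. 16*B^2 * (\<Sum>bs\<in>?L. smCE T (outcome bs) (forecast A w bs)))
         = 16*B^2 * integral\<^sup>L M (\<lambda>w. \<Sum>bs\<in>?L. smCE T (outcome bs) (forecast A w bs))"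
        by (rule integral_mult_right_zero)
      also have "integral\<^sup>L M (\<lambda>w. \<Sum>bs\<in>?L. smCE T (outcome bs) (forecast A w bs))
         = (\<Sum>bs\<in>?L. integral\<^sup>L M (\<lambda>w. smCE T (outcome bs) (forecast A w bs)))"
        by (rule Bochner_Integration.integral_sum) (rule smCE_int)
      also have "integral\<^sup>L M (\<lambda>w. 2^T * K) = 2^T * K" by (simp add: prob_space)
      finally show ?thesis .
    qed
    have E2: "integral\<^sup>L M (\<lambda>w. real T / 4 * (2^T - (\<Sum>bs\<in>?L. indicator (bad bs) w :: real)))
       = real T / 4 * (2^T - (\<Sum>bs\<in>?L. measure M (bad bs)))"
    proof -
      have "integral\<^sup>L M (\<lambda>w. real T / 4 * (2^T - (\<Sum>bs\<in>?L. indicator (bad bs) w :: real)))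
         = real T / 4 * integral\<^sup>L M (\<lambda>w. 2^T - (\<Sum>bs\<in>?L. indicator (bad bs) w :: real))"
        by (rule integral_mult_right_zero)
      also have "integral\<^sup>L M (\<lambda>w. 2^T - (\<Sum>bs\<in>?L. indicator (bad bs) w :: real))
         = integral\<^sup>L M (\<lambda>w. 2^T) - integral\<^sup>L M (\<lambda>w. \<Sum>bs\<in>?L. indicator (bad bs) w :: real)"
        by (rule Bochner_Integration.integral_diff) (use ii in auto)
      also have "integral\<^sup>L M (\<lambda>w. \<Sum>bs\<in>?L. indicator (bad bs) w :: real)
         = (\<Sum>bs\<in>?L. integral\<^sup>L M (indicator (bad bs) :: real \<Rightarrow> real))"
        using ind_int by (intro Bochner_Integration.integral_sum) auto
      also have "(\<Sum>bs\<in>?L. integral\<^sup>L M (indicator (bad bs) :: real \<Rightarrow> real)) = (\<Sum>bs\<in>?L. measure M (bad bs))"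
      proof (rule sum.cong[OF refl])
        fix bs
        have "bad bs \<inter> space M = bad bs" unfolding bad_def by auto
        then show "integral\<^sup>L M (indicator (bad bs) :: real \<Rightarrow> real) = measure M (bad bs)"
          by simp
      qed
      also have "integral\<^sup>L M (\<lambda>w. 2^T :: real) = 2^T" by (simp add: prob_space)
      finally show ?thesis .
    qed
    show ?thesis using I1 unfolding E1 E2 .
  qed
  define X where "X = (\<Sum>bs\<in>?L. measure M (bad bs))"
  define Y where "Y = (\<Sum>bs\<in>?L. integral\<^sup>L M (\<lambda>w. smCE T (outcome bs) (forecast A w bs)))"
  define Z :: real where "Z = 2^T"
  have Zpos: "Z > 0" unfolding Z_def by simp
  have main': "real T / 4 * (Z - X) \<le> Z * K + 16*B^2 * Y"
    using main unfolding X_def Y_def Z_def .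
  have main2: "real T / 4 * (1 - X / Z) \<le> K + 16*B^2 * (Y / Z)"
    by (rule arith_div[OF Zpos main'])
  show "1/8 \<le> (\<Sum>bs\<in>?L. measure M {w\<in>space M. \<exists>t\<in>{1..T}. \<bar>partial_bias A w bs t\<bar> \<ge> 1/8 * real T powr (1/3)}) / 2 ^ T
     \<or> 1/8 * real T powr (1/3) \<le> (\<Sum>bs\<in>?L. (\<integral>w. smCE T (outcome bs) (forecast A w bs) \<partial>M)) / 2 ^ T"
  proof (rule ccontr)
    assume H: "\<not> ?thesis"
    have eX: "(\<Sum>bs\<in>?L. measure M {w\<in>space M. \<exists>t\<in>{1..T}. \<bar>partial_bias A w bs t\<bar> \<ge> 1/8 * real T powr (1/3)}) / 2 ^ T = X / Z"
      unfolding X_def Z_def bad_def B_def ..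
    have eY: "(\<Sum>bs\<in>?L. (\<integral>w. smCE T (outcome bs) (forecast A w bs) \<partial>M)) / 2 ^ T = Y / Z"
      unfolding Y_def Z_def ..
    have P8: "X / Z < 1/8" and EB: "Y / Z < B"
      using H unfolding eX eY B_def by auto
    have s1: "real T / 4 * (7/8) < real T / 4 * (1 - X / Z)" using P8 Tpos by simp
    have s2: "16*B^2 * (Y / Z) \<le> 16 * B^2 * B" using EB by (intro mult_left_mono) auto
    have s3: "16 * B^2 * B = real T / 32" using B3 by (simp add: power3_eq_cube power2_eq_square)
    show False using s1 s2 s3 main2 Bsq Tpos unfolding K_def by linarith
  qed
qed

end
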